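(* Let $P$ be the random walk on a connected weighted graph on finite vertex set $X$, let $M\subseteq X$ be nonempty, let $S\subseteq X\setminus M$ be nonempty, and let $p\in\mathbb R$ and $T\in\mathbb N$ satisfy $\frac{2}{T}\le\pi(S)\,p\le\frac{1}{C_{S,M}}$. Then, for the walk started from $Y_0\sim\pi|_S$, \[ \Pr_{\pi|_S}\big(\tau_M<\tau_S^+\ \text{and}\ \tau_S^+<T\big)\ge p/2, \] i.e., with probability at least $p/2$ the walk first hits $M$ and then returns to $S$ within the first $T$ steps.
   Context: Weighted graph $w_{u,v}=w_{v,u}\ge0$, $w_u=\sum_vw_{u,v}$, $W=\sum_{u,v}w_{u,v}$ (ordered pairs), $P_{u,v}=w_{u,v}/w_u$, $\pi_u=w_u/W$, $\pi(S)=\sum_{u\in S}\pi_u$, $(\pi|_S)_u=\pi_u/\pi(S)$ for $u\in S$. $\tau_M=\min\{i\ge0:Y_i\in M\}$, $\tau_S^+=\min\{i>0:Y_i\in S\}$. A unit flow from a distribution $\sigma$ supported on $X\setminus M$ to $M$ is $p:X\times X\to\mathbb R$ with $p_{u,v}=0$ if $w_{u,v}=0$, $p_{u,v}=-p_{v,u}$, $\sum_vp_{u,v}=\sigma_u$ for $u\notin M$, $\sum_{u\in M}\sum_{v\notin M}p_{u,v}=-1$. $R_{\sigma,M}=\min_p\sum_{\{u,v\}}p_{u,v}^2/w_{u,v}$, $R_{S,M}=\min_{\sigma:\mathrm{supp}(\sigma)\subseteq S}R_{\sigma,M}$, $C_{S,M}=WR_{S,M}$. *)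

theory Defs
  imports Complex_Main
begin

definition wdeg :: "'a set \<Rightarrow> ('a \<Rightarrow> 'a \<Rightarrow> real) \<Rightarrow> 'a \<Rightarrow> real" where
  "wdeg X w u = (\<Sum>v\<in>X. w u v)"

definition wtotal :: "'a set \<Rightarrow> ('a \<Rightarrow> 'a \<Rightarrow> real) \<Rightarrow> real" where
  "wtotal X w = (\<Sum>u\<in>X. \<Sum>v\<in>X. w u v)"

definition trans_prob :: "'a set \<Rightarrow> ('a \<Rightarrow> 'a \<Rightarrow> real) \<Rightarrow> 'a \<Rightarrow> 'a \<Rightarrow> real" where
  "trans_prob X w u v = w u v / wdeg X w u"

definition stat_dist :: "'a set \<Rightarrow> ('a \<Rightarrow> 'a \<Rightarrow> real) \<Rightarrow> 'a \<Rightarrow> real" where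
  "stat_dist X w u = wdeg X w u / wtotal X w"

definition stat_meas :: "'a set \<Rightarrow> ('a \<Rightarrow> 'a \<Rightarrow> real) \<Rightarrow> 'a set \<Rightarrow> real" where
  "stat_meas X w S = (\<Sum>u\<in>S. stat_dist X w u)"

definition stat_restr :: "'a set \<Rightarrow> ('a \<Rightarrow> 'a \<Rightarrow> real) \<Rightarrow> 'a set \<Rightarrow> 'a \<Rightarrow> real" where
  "stat_restr X w S u = (if u \<in> S then stat_dist X w u / stat_meas X w S else 0)"

definition weighted_graph :: "'a set \<Rightarrow> ('a \<Rightarrow> 'a \<Rightarrow> real) \<Rightarrow> bool" where
  "weighted_graph X w \<longleftrightarrow> finite X \<and> (\<forall>u\<in>X. \<forall>v\<in>X. w u v = w v u \<and> 0 \<le> w u v)"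

definition connected_wgraph :: "'a set \<Rightarrow> ('a \<Rightarrow> 'a \<Rightarrow> real) \<Rightarrow> bool" where
  "connected_wgraph X w \<longleftrightarrow>
     (\<forall>u\<in>X. \<forall>v\<in>X. (u, v) \<in> {(a, b). a \<in> X \<and> b \<in> X \<and> 0 < w a b}\<^sup>*)"

definition unit_flow :: "'a set \<Rightarrow> ('a \<Rightarrow> 'a \<Rightarrow> real) \<Rightarrow> ('a \<Rightarrow> real) \<Rightarrow> 'a set
    \<Rightarrow> ('a \<Rightarrow> 'a \<Rightarrow> real) \<Rightarrow> bool" where
  "unit_flow X w \<sigma> M p \<longleftrightarrow>
     (\<forall>u\<in>X. \<forall>v\<in>X. w u v = 0 \<longrightarrow> p u v = 0) \<and>
     (\<forall>u\<in>X. \<forall>v\<in>X. p u v = - p v u) \<and>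
     (\<forall>u\<in>X - M. (\<Sum>v\<in>X. p u v) = \<sigma> u) \<and>
     (\<Sum>u\<in>M. \<Sum>v\<in>X - M. p u v) = -1"

text \<open>Energy: sum over unordered pairs {u,v} of p_uv^2/w_uv. For antisymmetric p we have
  p_uu = 0, and each unordered pair {u,v} with u \<noteq> v appears twice among ordered pairs,
  so this is half the sum over ordered pairs. (Terms with w_uv = 0 have p_uv = 0 and vanish.)\<close>
definition flow_energy :: "'a set \<Rightarrow> ('a \<Rightarrow> 'a \<Rightarrow> real) \<Rightarrow> ('a \<Rightarrow> 'a \<Rightarrow> real) \<Rightarrow> real" where
  "flow_energy X w p = (\<Sum>u\<in>X. \<Sum>v\<in>X. (p u v)\<^sup>2 / w u v) / 2"

definition eff_res :: "'a set \<Rightarrow> ('a \<Rightarrow> 'a \<Rightarrow> real) \<Rightarrow> ('a \<Rightarrow> real) \<Rightarrow> 'a set \<Rightarrow> real" where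
  "eff_res X w \<sigma> M = Inf {flow_energy X w p | p. unit_flow X w \<sigma> M p}"

definition is_distribution_on :: "'a set \<Rightarrow> ('a \<Rightarrow> real) \<Rightarrow> bool" where
  "is_distribution_on S \<sigma> \<longleftrightarrow> finite S \<and> (\<forall>u. 0 \<le> \<sigma> u) \<and> (\<forall>u. u \<notin> S \<longrightarrow> \<sigma> u = 0)
      \<and> (\<Sum>u\<in>S. \<sigma> u) = 1"

definition eff_res_set :: "'a set \<Rightarrow> ('a \<Rightarrow> 'a \<Rightarrow> real) \<Rightarrow> 'a set \<Rightarrow> 'a set \<Rightarrow> real" where
  "eff_res_set X w S M = Inf {eff_res X w \<sigma> M | \<sigma>. is_distribution_on S \<sigma>}"

definition commute_C :: "'a set \<Rightarrow> ('a \<Rightarrow> 'a \<Rightarrow> real) \<Rightarrow> 'a set \<Rightarrow> 'a set \<Rightarrow> real" where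
  "commute_C X w S M = wtotal X w * eff_res_set X w S M"

definition walk_prob :: "'a set \<Rightarrow> ('a \<Rightarrow> 'a \<Rightarrow> real) \<Rightarrow> ('a \<Rightarrow> real) \<Rightarrow> nat
    \<Rightarrow> ('a list \<Rightarrow> bool) \<Rightarrow> real" where
  "walk_prob X w \<mu> n E = (\<Sum>ys\<in>{ys. length ys = n \<and> set ys \<subseteq> X}.
      if E ys then \<mu> (ys ! 0) * (\<Prod>i<n - 1. trans_prob X w (ys ! i) (ys ! Suc i)) else 0)"

text \<open>Event {tau_M < tau_S^+ and tau_S^+ < T}, determined by Y_0..Y_{T-1}:
  some i with 0<i<T is the first positive time in S, and some j<i has Y_j in M.\<close>
definition hit_then_return :: "'a set \<Rightarrow> 'a set \<Rightarrow> nat \<Rightarrow> 'a list \<Rightarrow> bool" where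
  "hit_then_return M S T ys \<longleftrightarrow>
     (\<exists>i. 0 < i \<and> i < T \<and> ys ! i \<in> S \<and> (\<forall>k. 0 < k \<and> k < i \<longrightarrow> ys ! k \<notin> S)
        \<and> (\<exists>j<i. ys ! j \<in> M))"

end

theory Submission
  imports Defs
begin


definition LL :: "'a set \<Rightarrow> nat \<Rightarrow> 'a list set" where
  "LL X n = {ys. length ys = n \<and> set ys \<subseteq> X}"

fun wt :: "'a set \<Rightarrow> ('a \<Rightarrow> 'a \<Rightarrow> real) \<Rightarrow> 'a \<Rightarrow> 'a list \<Rightarrow> real" where
  "wt X w u [] = 1"
| "wt X w u (v # vs) = trans_prob X w u v * wt X w v vs"

definition Pk :: "'a set \<Rightarrow> ('a \<Rightarrow> 'a \<Rightarrow> real) \<Rightarrow> 'a \<Rightarrow> nat \<Rightarrow> ('a list \<Rightarrow> bool) \<Rightarrow> real" where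
  "Pk X w u k E = (\<Sum>vs\<in>LL X k. if E vs then wt X w u vs else 0)"

lemma finite_LL: "finite X \<Longrightarrow> finite (LL X n)"
  unfolding LL_def using finite_lists_length_eq[of X n] by (simp add: conj_commute)

lemma LL_0: "LL X 0 = {[]}" by (auto simp: LL_def)

lemma LL_Suc: "LL X (Suc n) = (\<lambda>(u, vs). u # vs) ` (X \<times> LL X n)"
  by (auto simp: LL_def length_Suc_conv image_iff)

lemma sum_LL_Suc:
  assumes "finite X"
  shows "(\<Sum>ys\<in>LL X (Suc n). F ys) = (\<Sum>u\<in>X. \<Sum>vs\<in>LL X n. F (u # vs))"
proof -
  have inj: "inj_on (\<lambda>(u, vs). u # vs) (X \<times> LL X n)" by (auto simp: inj_on_def)
  have "(\<Sum>ys\<in>LL X (Suc n). F ys) = (\<Sum>x\<in>X \<times> LL X n. F (case x of (u, vs) \<Rightarrow> u # vs))"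
    unfolding LL_Suc by (subst sum.reindex[OF inj]) (simp add: o_def)
  also have "\<dots> = (\<Sum>u\<in>X. \<Sum>vs\<in>LL X n. F (u # vs))"
    by (simp add: sum.cartesian_product case_prod_unfold)
  finally show ?thesis .
qed

lemma prod_wt: "(\<Prod>i<length vs. trans_prob X w ((u # vs) ! i) ((u # vs) ! Suc i)) = wt X w u vs"
proof (induction vs arbitrary: u)
  case Nil then show ?case by simp
next
  case (Cons v vs)
  show ?case
    by (simp only: length_Cons prod.lessThan_Suc_shift) (simp add: Cons[symmetric])
qed

lemma walk_prob_Pk:
  assumes "finite X"
  shows "walk_prob X w \<mu> (Suc n) E = (\<Sum>u\<in>X. \<mu> u * Pk X w u n (\<lambda>vs. E (u # vs)))"
proof -
  have "walk_prob X w \<mu> (Suc n) E = (\<Sum>ys\<in>LL X (Suc n).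
      if E ys then \<mu> (ys ! 0) * (\<Prod>i<Suc n - 1. trans_prob X w (ys ! i) (ys ! Suc i)) else 0)"
    unfolding walk_prob_def LL_def by simp
  also have "\<dots> = (\<Sum>u\<in>X. \<Sum>vs\<in>LL X n. if E (u # vs) then \<mu> u * wt X w u vs else 0)"
    unfolding sum_LL_Suc[OF assms]
    by (intro sum.cong refl) (auto simp: LL_def prod_wt[symmetric])
  also have "\<dots> = (\<Sum>u\<in>X. \<mu> u * Pk X w u n (\<lambda>vs. E (u # vs)))"
    unfolding Pk_def by (simp add: sum_distrib_left if_distrib cong: if_cong)
  finally show ?thesis .
qed

lemma Pk_0: "Pk X w u 0 E = (if E [] then 1 else 0)"
  by (simp add: Pk_def LL_0)

lemma Pk_Suc:
  assumes "finite X"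
  shows "Pk X w u (Suc k) E = (\<Sum>v\<in>X. trans_prob X w u v * Pk X w v k (\<lambda>vs. E (v # vs)))"
  unfolding Pk_def sum_LL_Suc[OF assms]
  by (simp add: sum_distrib_left if_distrib cong: if_cong)



locale wg =
  fixes X :: "'a set" and w :: "'a \<Rightarrow> 'a \<Rightarrow> real"
  assumes fin: "finite X"
    and symw: "\<And>u v. u \<in> X \<Longrightarrow> v \<in> X \<Longrightarrow> w u v = w v u"
    and nnw: "\<And>u v. u \<in> X \<Longrightarrow> v \<in> X \<Longrightarrow> 0 \<le> w u v"
    and degpos: "\<And>u. u \<in> X \<Longrightarrow> wdeg X w u > 0"
    and nonempty: "X \<noteq> {}"
begin

abbreviation "P \<equiv> trans_prob X w"
abbreviation "\<pi> \<equiv> stat_dist X w"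

lemma P_nn: "u \<in> X \<Longrightarrow> v \<in> X \<Longrightarrow> 0 \<le> P u v"
  unfolding trans_prob_def using nnw degpos by (simp add: less_imp_le)

lemma P_sum: "u \<in> X \<Longrightarrow> (\<Sum>v\<in>X. P u v) = 1"
  unfolding trans_prob_def using degpos[of u]
  by (simp add: sum_divide_distrib[symmetric] wdeg_def)

lemma w_eq: "u \<in> X \<Longrightarrow> w u v = wdeg X w u * P u v"
  unfolding trans_prob_def using degpos[of u] by simp

lemma W_pos: "wtotal X w > 0"
proof -
  obtain u where "u \<in> X" using nonempty by auto
  have "wtotal X w = (\<Sum>u\<in>X. wdeg X w u)" by (simp add: wtotal_def wdeg_def)
  also have "\<dots> > 0" using \<open>u\<in>X\<close> degpos fin
    by (intro sum_pos2[OF fin \<open>u\<in>X\<close>]) (auto intro: less_imp_le)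
  finally show ?thesis .
qed

lemma pi_nn: "u \<in> X \<Longrightarrow> 0 \<le> \<pi> u"
  unfolding stat_dist_def using degpos W_pos by (simp add: less_imp_le)

lemma pi_sum: "(\<Sum>u\<in>X. \<pi> u) = 1"
  unfolding stat_dist_def using W_pos
  by (simp add: sum_divide_distrib[symmetric] wtotal_def wdeg_def)

lemma stationary: "v \<in> X \<Longrightarrow> (\<Sum>u\<in>X. \<pi> u * P u v) = \<pi> v"
proof -
  assume v: "v \<in> X"
  have "(\<Sum>u\<in>X. \<pi> u * P u v) = (\<Sum>u\<in>X. w v u / wtotal X w)"
  proof (intro sum.cong refl)
    fix u assume u: "u \<in> X"
    then have "wdeg X w u \<noteq> 0" using degpos[of u] by simp
    then show "\<pi> u * P u v = w v u / wtotal X w"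
      using symw[OF u v] by (simp add: stat_dist_def trans_prob_def)
  qed
  also have "\<dots> = \<pi> v" by (simp add: stat_dist_def wdeg_def sum_divide_distrib)
  finally show ?thesis .
qed

lemma wt_nn: "u \<in> X \<Longrightarrow> set vs \<subseteq> X \<Longrightarrow> 0 \<le> wt X w u vs"
  by (induction vs arbitrary: u) (auto intro!: mult_nonneg_nonneg P_nn)

lemma Pk_nn: "u \<in> X \<Longrightarrow> 0 \<le> Pk X w u k E"
  unfolding Pk_def by (intro sum_nonneg) (auto simp: LL_def intro: wt_nn)

lemma Pk_True: "u \<in> X \<Longrightarrow> Pk X w u k (\<lambda>_. True) = 1"
proof (induction k arbitrary: u)
  case 0 then show ?case by (simp add: Pk_0)
next
  case (Suc k)
  then show ?case by (simp add: Pk_Suc[OF fin] P_sum)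
qed

lemma Pk_False: "Pk X w u k (\<lambda>_. False) = 0"
  by (simp add: Pk_def)

lemma Pk_mono: "u \<in> X \<Longrightarrow> (\<And>vs. E vs \<Longrightarrow> E' vs) \<Longrightarrow> Pk X w u k E \<le> Pk X w u k E'"
  unfolding Pk_def by (intro sum_mono) (auto simp: LL_def intro: wt_nn)

lemma Pk_le1: "u \<in> X \<Longrightarrow> Pk X w u k E \<le> 1"
  using Pk_mono[of u E "\<lambda>_. True" k] Pk_True by simp

lemma Pk_add: "Pk X w u k (\<lambda>vs. E1 vs \<or> E2 vs) \<le> Pk X w u k E1 + Pk X w u k E2"
  if "u \<in> X" for E1 E2
  unfolding Pk_def sum.distrib[symmetric]
  by (intro sum_mono) (auto simp: LL_def intro: wt_nn that)

end


context wg begin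

definition ff :: "'a set \<Rightarrow> nat \<Rightarrow> 'a \<Rightarrow> real" where
  "ff S k u = Pk X w u k (\<lambda>vs. \<forall>x\<in>set vs. x \<notin> S)"

lemma ff_0: "ff S 0 u = 1" by (simp add: ff_def Pk_0)

lemma ff_Suc: "ff S (Suc k) u = (\<Sum>v\<in>X. P u v * (if v \<in> S then 0 else ff S k v))"
  unfolding ff_def Pk_Suc[OF fin]
  by (intro sum.cong refl) (auto simp: Pk_False)

lemma ff_nn: "u \<in> X \<Longrightarrow> 0 \<le> ff S k u" unfolding ff_def by (rule Pk_nn)

lemma ff_mono: "u \<in> X \<Longrightarrow> ff S (Suc k) u \<le> ff S k u"
proof (induction k arbitrary: u)
  case 0
  have "ff S 1 u \<le> (\<Sum>v\<in>X. P u v * 1)"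
    unfolding One_nat_def ff_Suc ff_0
    by (intro sum_mono) (auto intro: P_nn 0)
  then show ?case using P_sum[OF 0] by (simp add: ff_0)
next
  case (Suc k)
  have "ff S (Suc (Suc k)) u = (\<Sum>v\<in>X. P u v * (if v \<in> S then 0 else ff S (Suc k) v))"
    by (rule ff_Suc)
  also have "\<dots> \<le> (\<Sum>v\<in>X. P u v * (if v \<in> S then 0 else ff S k v))"
    by (intro sum_mono mult_left_mono) (auto intro: P_nn Suc)
  also have "\<dots> = ff S (Suc k) u" by (rule ff_Suc[symmetric])
  finally show ?case .
qed

lemma ff_antimono: "u \<in> X \<Longrightarrow> k \<le> n \<Longrightarrow> ff S n u \<le> ff S k u"
proof (induction n)
  case 0 then show ?case by simp
next
  case (Suc n)
  then show ?case using ff_mono[of u S n] by (cases "k = Suc n") auto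
qed

lemma kac_sum:
  assumes SX: "S \<subseteq> X"
  shows "(\<Sum>k<Suc n. \<Sum>s\<in>S. \<pi> s * ff S k s) + (\<Sum>v\<in>X - S. \<pi> v * ff S n v) = 1"
proof (induction n)
  case 0
  have "(\<Sum>s\<in>S. \<pi> s * ff S 0 s) + (\<Sum>v\<in>X - S. \<pi> v * ff S 0 v) = (\<Sum>u\<in>X. \<pi> u)"
    using sum.subset_diff[OF SX fin, of \<pi>] by (simp add: ff_0)
  then show ?case using pi_sum by simp
next
  case (Suc n)
  have step: "(\<Sum>s\<in>S. \<pi> s * ff S (Suc n) s) + (\<Sum>v\<in>X - S. \<pi> v * ff S (Suc n) v)
      = (\<Sum>v\<in>X - S. \<pi> v * ff S n v)"
  proof -
    have "(\<Sum>s\<in>S. \<pi> s * ff S (Suc n) s) + (\<Sum>v\<in>X - S. \<pi> v * ff S (Suc n) v)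
        = (\<Sum>u\<in>X. \<pi> u * ff S (Suc n) u)"
      using sum.subset_diff[OF SX fin, of "\<lambda>u. \<pi> u * ff S (Suc n) u"] by simp
    also have "\<dots> = (\<Sum>u\<in>X. \<Sum>v\<in>X. \<pi> u * P u v * (if v \<in> S then 0 else ff S n v))"
      by (simp add: ff_Suc sum_distrib_left mult.assoc)
    also have "\<dots> = (\<Sum>v\<in>X. \<Sum>u\<in>X. \<pi> u * P u v * (if v \<in> S then 0 else ff S n v))"
      by (rule sum.swap)
    also have "\<dots> = (\<Sum>v\<in>X. \<pi> v * (if v \<in> S then 0 else ff S n v))"
      by (intro sum.cong refl) (simp add: sum_distrib_right[symmetric] stationary)
    also have "\<dots> = (\<Sum>v\<in>X - S. \<pi> v * ff S n v)"
      by (intro sum.mono_neutral_cong_right fin) auto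
    finally show ?thesis .
  qed
  show ?case using Suc step by simp
qed

lemma kac_bound:
  assumes SX: "S \<subseteq> X"
  shows "real (Suc n) * (\<Sum>s\<in>S. \<pi> s * ff S n s) \<le> 1"
proof -
  have A: "0 \<le> (\<Sum>v\<in>X - S. \<pi> v * ff S n v)"
    by (intro sum_nonneg mult_nonneg_nonneg pi_nn ff_nn) auto
  have "real (Suc n) * (\<Sum>s\<in>S. \<pi> s * ff S n s) = (\<Sum>k<Suc n. \<Sum>s\<in>S. \<pi> s * ff S n s)"
    by simp
  also have "\<dots> \<le> (\<Sum>k<Suc n. \<Sum>s\<in>S. \<pi> s * ff S k s)"
    using SX by (intro sum_mono mult_left_mono ff_antimono pi_nn) auto
  finally show ?thesis using kac_sum[OF SX, of n] A by linarith
qed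

end


fun retS :: "'a set \<Rightarrow> 'a set \<Rightarrow> 'a list \<Rightarrow> bool" where
  "retS S M [] = False"
| "retS S M (v # vs) = (v \<in> S \<or> (v \<notin> M \<and> retS S M vs))"

context wg begin

definition qq :: "'a set \<Rightarrow> 'a set \<Rightarrow> nat \<Rightarrow> 'a \<Rightarrow> real" where
  "qq S M k u = Pk X w u k (retS S M)"

definition GG :: "'a set \<Rightarrow> 'a set \<Rightarrow> nat \<Rightarrow> 'a \<Rightarrow> real" where
  "GG S M k v = (if v \<in> S then 1 else if v \<in> M then 0 else qq S M k v)"

lemma qq_0: "qq S M 0 u = 0" by (simp add: qq_def Pk_0)

lemma qq_Suc: "qq S M (Suc k) u = (\<Sum>v\<in>X. P u v * GG S M k v)"
  unfolding qq_def Pk_Suc[OF fin]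
  by (intro sum.cong refl) (auto simp: Pk_False Pk_True GG_def qq_def)

lemma qq_nn: "u \<in> X \<Longrightarrow> 0 \<le> qq S M k u" unfolding qq_def by (rule Pk_nn)
lemma qq_le1: "u \<in> X \<Longrightarrow> qq S M k u \<le> 1" unfolding qq_def by (rule Pk_le1)

lemma GG_nn: "v \<in> X \<Longrightarrow> 0 \<le> GG S M k v" by (simp add: GG_def qq_nn)

lemma qq_mono: "u \<in> X \<Longrightarrow> qq S M k u \<le> qq S M (Suc k) u"
proof (induction k arbitrary: u)
  case 0 then show ?case by (simp add: qq_0 qq_nn)
next
  case (Suc k)
  have "qq S M (Suc k) u = (\<Sum>v\<in>X. P u v * GG S M k v)" by (rule qq_Suc)
  also have "\<dots> \<le> (\<Sum>v\<in>X. P u v * GG S M (Suc k) v)"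
    by (intro sum_mono mult_left_mono) (auto intro: P_nn Suc simp: GG_def)
  also have "\<dots> = qq S M (Suc (Suc k)) u" by (rule qq_Suc[symmetric])
  finally show ?case .
qed

lemma dirichlet_bound:
  assumes SX: "S \<subseteq> X - M"
  shows "(\<Sum>u\<in>X. GG S M n u * (wdeg X w u * GG S M n u - (\<Sum>v\<in>X. w u v * GG S M n v)))
     \<le> (\<Sum>s\<in>S. wdeg X w s * (1 - qq S M n s))"
proof -
  let ?g = "GG S M n"
  let ?t = "\<lambda>u. ?g u * (wdeg X w u * ?g u - (\<Sum>v\<in>X. w u v * ?g v))"
  have inner: "(\<Sum>v\<in>X. w u v * ?g v) = wdeg X w u * qq S M (Suc n) u" if "u \<in> X" for u
    using that by (simp add: qq_Suc w_eq sum_distrib_left mult.assoc)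
  have "(\<Sum>u\<in>X. ?t u) = (\<Sum>u\<in>S. ?t u) + (\<Sum>u\<in>X - S. ?t u)"
  proof -
    have "S \<subseteq> X" using SX by auto
    then show ?thesis using sum.subset_diff[of S X ?t] fin by (simp add: add.commute)
  qed
  also have "(\<Sum>u\<in>X - S. ?t u) \<le> 0"
  proof (intro sum_nonpos)
    fix u assume u: "u \<in> X - S"
    show "?t u \<le> 0"
    proof (cases "u \<in> M")
      case True then show ?thesis using u by (simp add: GG_def)
    next
      case False
      then have "?t u = qq S M n u * (wdeg X w u * (qq S M n u - qq S M (Suc n) u))"
        using u inner[of u] by (simp add: GG_def algebra_simps)
      also have "\<dots> \<le> 0"
        using u qq_nn[of u S M n] qq_mono[of u S M n] degpos[of u]
        by (intro mult_nonneg_nonpos mult_nonneg_nonpos) auto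
      finally show ?thesis .
    qed
  qed
  also have "(\<Sum>u\<in>S. ?t u) \<le> (\<Sum>s\<in>S. wdeg X w s * (1 - qq S M n s))"
  proof (intro sum_mono)
    fix s assume s: "s \<in> S"
    then have sX: "s \<in> X" using SX by auto
    have "?t s = wdeg X w s * (1 - qq S M (Suc n) s)"
      using s inner[OF sX] by (simp add: GG_def algebra_simps)
    also have "\<dots> \<le> wdeg X w s * (1 - qq S M n s)"
      using qq_mono[OF sX, of S M n] degpos[OF sX] by (intro mult_left_mono) auto
    finally show "?t s \<le> wdeg X w s * (1 - qq S M n s)" .
  qed
  finally show ?thesis by simp
qed

end


lemma amgm_term:
  fixes f d ww l :: real
  assumes "0 \<le> ww" "ww = 0 \<longrightarrow> f = 0" "0 < l"
  shows "f * d \<le> (f\<^sup>2 / ww) / (2 * l) + l / 2 * (ww * d\<^sup>2)"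
proof (cases "ww = 0")
  case True then show ?thesis using assms by simp
next
  case False
  then have w: "ww > 0" using assms by simp
  have "0 \<le> (f - l * ww * d)\<^sup>2 / (2 * l * ww)" using w assms by simp
  also have "(f - l * ww * d)\<^sup>2 / (2 * l * ww) = (f\<^sup>2 / ww) / (2 * l) + l / 2 * (ww * d\<^sup>2) - f * d"
    using w assms by (simp add: field_simps power2_eq_square)
  finally show ?thesis by simp
qed

context wg begin

lemma flow_ineq:
  assumes uf: "unit_flow X w \<sigma> M f" and dist: "is_distribution_on S \<sigma>"
    and SX: "S \<subseteq> X - M" and MX: "M \<subseteq> X"
    and g1: "\<And>u. u \<in> S \<Longrightarrow> g u = 1" and g0: "\<And>u. u \<in> M \<Longrightarrow> g u = 0" and lam: "l > 0"
  shows "2 \<le> flow_energy X w f / l + l * (\<Sum>u\<in>X. g u * (wdeg X w u * g u - (\<Sum>v\<in>X. w u v * g v)))"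
proof -
  from uf have supp: "\<And>u v. u \<in> X \<Longrightarrow> v \<in> X \<Longrightarrow> w u v = 0 \<Longrightarrow> f u v = 0"
    and anti: "\<And>u v. u \<in> X \<Longrightarrow> v \<in> X \<Longrightarrow> f u v = - f v u"
    and divf: "\<And>u. u \<in> X - M \<Longrightarrow> (\<Sum>v\<in>X. f u v) = \<sigma> u"
    unfolding unit_flow_def by blast+
  from dist have s0: "\<And>u. u \<notin> S \<Longrightarrow> \<sigma> u = 0" and s1: "(\<Sum>u\<in>S. \<sigma> u) = 1"
    unfolding is_distribution_on_def by auto
  define dv where "dv u = (\<Sum>v\<in>X. f u v)" for u
  have A1: "(\<Sum>u\<in>X. \<Sum>v\<in>X. f u v * g u) = (\<Sum>u\<in>X. g u * dv u)"
    by (simp add: dv_def sum_distrib_left mult.commute)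
  have "(\<Sum>u\<in>X. \<Sum>v\<in>X. f u v * g v) = (\<Sum>v\<in>X. \<Sum>u\<in>X. f u v * g v)" by (rule sum.swap)
  also have "\<dots> = (\<Sum>v\<in>X. \<Sum>u\<in>X. - (f v u * g v))"
    by (intro sum.cong refl) (metis anti minus_mult_left)
  also have "\<dots> = - (\<Sum>v\<in>X. g v * dv v)"
    by (simp add: dv_def sum_distrib_left mult.commute sum_negf)
  finally have A2: "(\<Sum>u\<in>X. \<Sum>v\<in>X. f u v * g v) = - (\<Sum>v\<in>X. g v * dv v)" .
  have "(\<Sum>u\<in>X. g u * dv u) = (\<Sum>u\<in>M. g u * dv u) + (\<Sum>u\<in>X - M. g u * dv u)"
    using sum.subset_diff[OF MX fin, of "\<lambda>u. g u * dv u"] by simp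
  also have "(\<Sum>u\<in>M. g u * dv u) = 0" by (simp add: g0)
  also have "(\<Sum>u\<in>X - M. g u * dv u) = (\<Sum>u\<in>X - M. \<sigma> u)"
  proof (intro sum.cong refl)
    fix u assume "u \<in> X - M"
    then show "g u * dv u = \<sigma> u" by (cases "u \<in> S") (auto simp: dv_def divf g1 s0)
  qed
  also have "\<dots> = (\<Sum>u\<in>S. \<sigma> u)"
    using SX fin by (intro sum.mono_neutral_right) (auto simp: s0)
  finally have A3: "(\<Sum>u\<in>X. g u * dv u) = 1" using s1 by simp
  have A: "(\<Sum>u\<in>X. \<Sum>v\<in>X. f u v * (g u - g v)) = 2"
    using A1 A2 A3 by (simp add: right_diff_distrib sum_subtractf)
  have C: "(\<Sum>u\<in>X. \<Sum>v\<in>X. w u v * (g u - g v)\<^sup>2)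
      = 2 * (\<Sum>u\<in>X. g u * (wdeg X w u * g u - (\<Sum>v\<in>X. w u v * g v)))"
  proof -
    have e: "w u v * (g u - g v)\<^sup>2 = w u v * (g u)\<^sup>2 + w u v * (g v)\<^sup>2 - 2 * (w u v * g u * g v)" for u v
      by (simp add: power2_eq_square algebra_simps)
    have c1: "(\<Sum>u\<in>X. \<Sum>v\<in>X. w u v * (g v)\<^sup>2) = (\<Sum>u\<in>X. \<Sum>v\<in>X. w u v * (g u)\<^sup>2)"
      apply (subst sum.swap)
      by (intro sum.cong refl) (metis symw)
    have "(\<Sum>u\<in>X. \<Sum>v\<in>X. w u v * (g u - g v)\<^sup>2) =
       2 * (\<Sum>u\<in>X. \<Sum>v\<in>X. w u v * (g u)\<^sup>2) - 2 * (\<Sum>u\<in>X. \<Sum>v\<in>X. w u v * g u * g v)"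
      unfolding e using c1 by (simp add: sum.distrib sum_subtractf sum_distrib_left)
    also have "\<dots> = 2 * (\<Sum>u\<in>X. g u * (wdeg X w u * g u - (\<Sum>v\<in>X. w u v * g v)))"
    proof -
      have "g u * (wdeg X w u * g u - (\<Sum>v\<in>X. w u v * g v))
          = (\<Sum>v\<in>X. w u v * (g u)\<^sup>2) - (\<Sum>v\<in>X. w u v * g u * g v)" for u
      proof -
        have "g u * (wdeg X w u * g u) = (\<Sum>v\<in>X. w u v * (g u)\<^sup>2)"
          unfolding wdeg_def sum_distrib_right sum_distrib_left
          by (intro sum.cong refl) (simp add: power2_eq_square)
        moreover have "g u * (\<Sum>v\<in>X. w u v * g v) = (\<Sum>v\<in>X. w u v * g u * g v)"
          unfolding sum_distrib_left by (intro sum.cong refl) simp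
        ultimately show ?thesis by (simp add: right_diff_distrib)
      qed
      then show ?thesis by (simp add: sum_subtractf right_diff_distrib)
    qed
    finally show ?thesis .
  qed
  have "2 = (\<Sum>u\<in>X. \<Sum>v\<in>X. f u v * (g u - g v))" using A by simp
  also have "\<dots> \<le> (\<Sum>u\<in>X. \<Sum>v\<in>X. ((f u v)\<^sup>2 / w u v) / (2 * l) + l / 2 * (w u v * (g u - g v)\<^sup>2))"
    by (intro sum_mono amgm_term) (auto simp: nnw supp lam)
  also have "\<dots> = (\<Sum>u\<in>X. \<Sum>v\<in>X. (f u v)\<^sup>2 / w u v) / (2 * l)
       + l / 2 * (\<Sum>u\<in>X. \<Sum>v\<in>X. w u v * (g u - g v)\<^sup>2)"
    by (simp add: sum.distrib sum_divide_distrib sum_distrib_left)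
  also have "\<dots> = flow_energy X w f / l + l * (\<Sum>u\<in>X. g u * (wdeg X w u * g u - (\<Sum>v\<in>X. w u v * g v)))"
    unfolding C flow_energy_def by simp
  finally show ?thesis .
qed

end


context wg begin

lemma path_flow:
  assumes "(a, m) \<in> {(a, b). a \<in> X \<and> b \<in> X \<and> 0 < w a b}\<^sup>*"
  shows "\<exists>f::'a \<Rightarrow> 'a \<Rightarrow> real. (\<forall>u\<in>X. \<forall>v\<in>X. w u v = 0 \<longrightarrow> f u v = 0) \<and> (\<forall>u\<in>X. \<forall>v\<in>X. f u v = - f v u)
     \<and> (\<forall>u\<in>X. (\<Sum>v\<in>X. f u v) = (if u = a then 1 else 0) - (if u = m then 1 else 0))"
  using assms
proof (induction rule: converse_rtrancl_induct)
  case base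
  show ?case by (rule exI[of _ "\<lambda>u v. 0"]) simp
next
  case (step y z)
  have yz: "y \<in> X" "z \<in> X" "0 < w y z" using step(1) by auto
  from step.IH obtain f :: "'a \<Rightarrow> 'a \<Rightarrow> real" where fP: "(\<forall>u\<in>X. \<forall>v\<in>X. w u v = 0 \<longrightarrow> f u v = 0)
    \<and> (\<forall>u\<in>X. \<forall>v\<in>X. f u v = - f v u)
    \<and> (\<forall>u\<in>X. (\<Sum>v\<in>X. f u v) = (if u = z then 1 else 0) - (if u = m then 1 else 0))"
    by (rule exE)
  note f1 = conjunct1[OF fP] and f2 = conjunct1[OF conjunct2[OF fP]] and f3 = conjunct2[OF conjunct2[OF fP]]
  define e where "e u v = (if u = y \<and> v = z then 1 else 0) - (if u = z \<and> v = y then 1 else (0::real))" for u v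
  have wzy: "0 < w z y" using symw[of y z] yz by simp
  have e1: "\<forall>u\<in>X. \<forall>v\<in>X. w u v = 0 \<longrightarrow> e u v = 0" using yz wzy by (auto simp: e_def)
  have e2: "\<forall>u\<in>X. \<forall>v\<in>X. e u v = - e v u" unfolding e_def by (intro ballI, cases "y = z") auto
  have e3: "(\<Sum>v\<in>X. e u v) = (if u = y then 1 else 0) - (if u = z then 1 else 0)" for u
  proof -
    have a: "(\<Sum>v\<in>X. if u = y \<and> v = z then 1 else (0::real)) = (if u = y then 1 else 0)"
      using yz fin by (cases "u = y") simp_all
    have b: "(\<Sum>v\<in>X. if u = z \<and> v = y then 1 else (0::real)) = (if u = z then 1 else 0)"
      using yz fin by (cases "u = z") simp_all
    show ?thesis unfolding e_def sum_subtractf a b ..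
  qed
  show ?case
  proof (intro exI[of _ "\<lambda>u v. f u v + e u v"] conjI ballI impI)
    fix u v assume "u \<in> X" "v \<in> X"
    then show "w u v = 0 \<Longrightarrow> f u v + e u v = 0" using f1 e1 by simp
    have "f u v = - f v u" "e u v = - e v u"
      using bspec[OF bspec[OF f2 \<open>u\<in>X\<close>] \<open>v\<in>X\<close>] bspec[OF bspec[OF e2 \<open>u\<in>X\<close>] \<open>v\<in>X\<close>] by auto
    then show "f u v + e u v = - (f v u + e v u)" by linarith
  next
    fix u assume "u \<in> X"
    then show "(\<Sum>v\<in>X. f u v + e u v) = (if u = y then 1 else 0) - (if u = m then 1 else 0)"
      using bspec[OF f3 \<open>u\<in>X\<close>] e3[of u] by (simp only: sum.distrib)
  qed
qed


lemma antisym_sum_zero: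
  assumes "A \<subseteq> X" and anti: "\<And>u v. u \<in> X \<Longrightarrow> v \<in> X \<Longrightarrow> g u v = - g v u"
  shows "(\<Sum>u\<in>A. \<Sum>v\<in>A. g u v) = (0::real)"
proof -
  have "(\<Sum>u\<in>A. \<Sum>v\<in>A. g u v) = (\<Sum>v\<in>A. \<Sum>u\<in>A. g u v)" by (rule sum.swap)
  also have "\<dots> = (\<Sum>v\<in>A. \<Sum>u\<in>A. - g v u)"
    using assms(1) by (intro sum.cong refl) (metis anti subsetD)
  also have "\<dots> = - (\<Sum>v\<in>A. \<Sum>u\<in>A. g v u)" by (simp add: sum_negf)
  finally show ?thesis by simp
qed

lemma dist_flow:
  assumes conn: "connected_wgraph X w" and MX: "M \<subseteq> X" and m0: "m0 \<in> M"
    and SX: "S \<subseteq> X - M" and dist: "is_distribution_on S \<sigma>"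
  shows "\<exists>f. unit_flow X w \<sigma> M f"
proof -
  from dist have s0: "\<And>u. u \<notin> S \<Longrightarrow> \<sigma> u = 0" and s1: "(\<Sum>u\<in>S. \<sigma> u) = 1"
    unfolding is_distribution_on_def by auto
  have "\<forall>s\<in>S. \<exists>f::'a \<Rightarrow> 'a \<Rightarrow> real. (\<forall>u\<in>X. \<forall>v\<in>X. w u v = 0 \<longrightarrow> f u v = 0) \<and> (\<forall>u\<in>X. \<forall>v\<in>X. f u v = - f v u)
     \<and> (\<forall>u\<in>X. (\<Sum>v\<in>X. f u v) = (if u = s then 1 else 0) - (if u = m0 then 1 else 0))"
  proof
    fix s assume "s \<in> S"
    then have "s \<in> X" "m0 \<in> X" using SX MX m0 by auto
    then show "\<exists>f::'a \<Rightarrow> 'a \<Rightarrow> real. (\<forall>u\<in>X. \<forall>v\<in>X. w u v = 0 \<longrightarrow> f u v = 0) \<and> (\<forall>u\<in>X. \<forall>v\<in>X. f u v = - f v u)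
     \<and> (\<forall>u\<in>X. (\<Sum>v\<in>X. f u v) = (if u = s then 1 else 0) - (if u = m0 then 1 else 0))"
      using conn unfolding connected_wgraph_def by (intro path_flow) blast
  qed
  then obtain F :: "'a \<Rightarrow> 'a \<Rightarrow> 'a \<Rightarrow> real" where FP: "\<forall>s\<in>S. (\<forall>u\<in>X. \<forall>v\<in>X. w u v = 0 \<longrightarrow> F s u v = 0) \<and> (\<forall>u\<in>X. \<forall>v\<in>X. F s u v = - F s v u)
     \<and> (\<forall>u\<in>X. (\<Sum>v\<in>X. F s u v) = (if u = s then 1 else 0) - (if u = m0 then 1 else 0))"
    by (metis (no_types, lifting) bchoice)
  have F1: "\<And>s u v. s \<in> S \<Longrightarrow> u \<in> X \<Longrightarrow> v \<in> X \<Longrightarrow> w u v = 0 \<Longrightarrow> F s u v = 0"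
    using FP by blast
  have F2: "\<And>s u v. s \<in> S \<Longrightarrow> u \<in> X \<Longrightarrow> v \<in> X \<Longrightarrow> F s u v = - F s v u"
  proof -
    fix s u v assume "s \<in> S" "u \<in> X" "v \<in> X"
    show "F s u v = - F s v u" by (rule bspec[OF bspec[OF conjunct1[OF conjunct2[OF bspec[OF FP \<open>s\<in>S\<close>]]] \<open>u\<in>X\<close>] \<open>v\<in>X\<close>])
  qed
  have F3: "\<And>s u. s \<in> S \<Longrightarrow> u \<in> X \<Longrightarrow> (\<Sum>v\<in>X. F s u v) = (if u = s then 1 else 0) - (if u = m0 then 1 else 0)"
  proof -
    fix s u assume "s \<in> S" "u \<in> X"
    show "(\<Sum>v\<in>X. F s u v) = (if u = s then 1 else 0) - (if u = m0 then 1 else 0)"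
      by (rule bspec[OF conjunct2[OF conjunct2[OF bspec[OF FP \<open>s\<in>S\<close>]]] \<open>u\<in>X\<close>])
  qed
  have finS: "finite S" using dist unfolding is_distribution_on_def by auto
  define g where "g u v = (\<Sum>s\<in>S. \<sigma> s * F s u v)" for u v
  have g1: "\<And>u v. u \<in> X \<Longrightarrow> v \<in> X \<Longrightarrow> w u v = 0 \<Longrightarrow> g u v = 0"
    unfolding g_def by (intro sum.neutral) (auto simp: F1)
  have g2: "\<And>u v. u \<in> X \<Longrightarrow> v \<in> X \<Longrightarrow> g u v = - g v u"
  proof -
    fix u v assume uv: "u \<in> X" "v \<in> X"
    have "g u v = (\<Sum>s\<in>S. - (\<sigma> s * F s v u))"
      unfolding g_def by (intro sum.cong refl) (metis F2 uv minus_mult_right)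
    then show "g u v = - g v u" by (simp add: g_def sum_negf)
  qed
  have g3: "(\<Sum>v\<in>X. g u v) = (if u \<in> S then \<sigma> u else 0) - (if u = m0 then 1 else 0)" if u: "u \<in> X" for u
  proof -
    have "(\<Sum>v\<in>X. g u v) = (\<Sum>s\<in>S. \<sigma> s * (\<Sum>v\<in>X. F s u v))"
      unfolding g_def by (simp add: sum_distrib_left sum.swap[of _ X])
    also have "\<dots> = (\<Sum>s\<in>S. \<sigma> s * ((if u = s then 1 else 0) - (if u = m0 then 1 else 0)))"
      by (intro sum.cong refl) (simp add: F3 u)
    also have "\<dots> = (\<Sum>s\<in>S. if u = s then \<sigma> s else 0) - (\<Sum>s\<in>S. \<sigma> s) * (if u = m0 then 1 else 0)"
    proof -
      have e: "\<sigma> s * ((if u = s then 1 else 0) - c) = (if u = s then \<sigma> s else 0) - \<sigma> s * c" for s and c :: real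
        by (simp add: right_diff_distrib)
      show ?thesis unfolding e sum_subtractf sum_distrib_right[symmetric] ..
    qed
    also have "\<dots> = (if u \<in> S then \<sigma> u else 0) - (if u = m0 then 1 else 0)"
      using finS s1 by (simp add: sum.delta)
    finally show ?thesis .
  qed
  have "unit_flow X w \<sigma> M g"
    unfolding unit_flow_def
  proof (intro conjI ballI impI)
    fix u v assume "u \<in> X" "v \<in> X"
    then show "w u v = 0 \<Longrightarrow> g u v = 0" by (rule g1)
    show "g u v = - g v u" using g2 \<open>u\<in>X\<close> \<open>v\<in>X\<close> .
  next
    fix u assume u: "u \<in> X - M"
    then have "u \<noteq> m0" using m0 by auto
    then show "(\<Sum>v\<in>X. g u v) = \<sigma> u" using g3[of u] u s0 by auto
  next
    have MS: "M \<inter> S = {}" using SX by auto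
    have "(\<Sum>u\<in>M. \<Sum>v\<in>X. g u v) = (\<Sum>u\<in>M. \<Sum>v\<in>M. g u v) + (\<Sum>u\<in>M. \<Sum>v\<in>X - M. g u v)"
    proof -
      have h: "\<And>u. sum (g u) X = sum (g u) M + sum (g u) (X - M)"
        using sum.subset_diff[OF MX fin] by (simp add: add.commute)
      show ?thesis by (simp only: h sum.distrib)
    qed
    moreover have "(\<Sum>u\<in>M. \<Sum>v\<in>M. g u v) = 0" by (rule antisym_sum_zero[OF MX g2])
    moreover have "(\<Sum>u\<in>M. \<Sum>v\<in>X. g u v) = (\<Sum>u\<in>M. - (if u = m0 then 1 else 0))"
    proof (intro sum.cong refl)
      fix u assume "u \<in> M"
      then have "u \<in> X" "u \<notin> S" using MX MS by auto
      then show "(\<Sum>v\<in>X. g u v) = - (if u = m0 then 1 else 0)" by (simp add: g3)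
    qed
    moreover have "(\<Sum>u\<in>M. - (if u = m0 then 1 else 0)) = (-1::real)"
      using m0 finite_subset[OF MX fin] by (simp add: sum_negf)
    ultimately show "(\<Sum>u\<in>M. \<Sum>v\<in>X - M. g u v) = -1" by linarith
  qed
  then show ?thesis by blast
qed

end


lemma retS_intro: "i < length vs \<Longrightarrow> vs ! i \<in> S \<Longrightarrow> (\<forall>k<i. vs ! k \<notin> M) \<Longrightarrow> retS S M vs"
proof (induction vs arbitrary: i)
  case Nil then show ?case by simp
next
  case (Cons v vs)
  show ?case
  proof (cases i)
    case 0 then show ?thesis using Cons by simp
  next
    case (Suc i')
    have "v \<notin> M" using Cons.prems(3) Suc by auto
    moreover have "retS S M vs"
      using Cons.prems Suc by (intro Cons.IH[of i']) auto
    ultimately show ?thesis by simp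
  qed
qed

lemma trichotomy:
  assumes "s \<in> S" "length vs = n" "T = Suc n"
  shows "hit_then_return M S T (s # vs) \<or> (\<forall>x\<in>set vs. x \<notin> S) \<or> retS S M vs"
proof (cases "\<exists>x\<in>set vs. x \<in> S")
  case False then show ?thesis by blast
next
  case True
  then obtain i1 where i1: "i1 < length vs" "vs ! i1 \<in> S" by (metis in_set_conv_nth)
  define i0 where "i0 = (LEAST i. i < length vs \<and> vs ! i \<in> S)"
  have i0: "i0 < length vs" "vs ! i0 \<in> S" using LeastI[of "\<lambda>i. i < length vs \<and> vs ! i \<in> S", OF conjI[OF i1]]
    unfolding i0_def by auto
  have min: "\<And>k. k < i0 \<Longrightarrow> vs ! k \<notin> S"
  proof -
    fix k assume k: "k < i0"
    show "vs ! k \<notin> S"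
    proof
      assume "vs ! k \<in> S"
      then have "i0 \<le> k" unfolding i0_def using k i0(1) by (intro Least_le) simp
      then show False using k by simp
    qed
  qed
  show ?thesis
  proof (cases "\<exists>j<Suc i0. (s # vs) ! j \<in> M")
    case True
    note ex = True
    have "hit_then_return M S T (s # vs)"
      unfolding hit_then_return_def
    proof (rule exI[of _ "Suc i0"], intro conjI)
      show "0 < Suc i0" by simp
      show "Suc i0 < T" using i0 assms by simp
      show "(s # vs) ! Suc i0 \<in> S" using i0 by simp
      show "\<forall>k. 0 < k \<and> k < Suc i0 \<longrightarrow> (s # vs) ! k \<notin> S"
      proof (intro allI impI)
      fix k assume "0 < k \<and> k < Suc i0"
      then obtain k' where "k = Suc k'" "k' < i0" by (cases k) auto
      then show "(s # vs) ! k \<notin> S" using min by simp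
      qed
      show "\<exists>j<Suc i0. (s # vs) ! j \<in> M" by (rule ex)
    qed
    then show ?thesis by blast
  next
    case False
    have "retS S M vs"
    proof (rule retS_intro[OF i0])
      show "\<forall>k<i0. vs ! k \<notin> M"
      proof (intro allI impI)
        fix k assume "k < i0"
        then have "(s # vs) ! Suc k \<notin> M" using False by blast
        then show "vs ! k \<notin> M" by simp
      qed
    qed
    then show ?thesis by blast
  qed
qed



context wg begin

lemma energy_nn: "0 \<le> flow_energy X w f"
  unfolding flow_energy_def by (intro divide_nonneg_pos sum_nonneg divide_nonneg_nonneg) (auto simp: nnw)

lemma res_bound:
  fixes n :: nat
  assumes conn: "connected_wgraph X w" and MX: "M \<subseteq> X" and Mne: "M \<noteq> {}"
    and SX: "S \<subseteq> X - M" and Sne: "S \<noteq> {}"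
  defines "D' \<equiv> (\<Sum>s\<in>S. wdeg X w s * (1 - qq S M n s))"
  shows "D' > 0" "eff_res_set X w S M \<ge> 1 / D'"
proof -
  obtain m0 where m0: "m0 \<in> M" using Mne by auto
  obtain s0 where s0: "s0 \<in> S" using Sne by auto
  have finS: "finite S" using SX fin finite_subset by blast
  let ?\<sigma>0 = "\<lambda>u. if u = s0 then 1 else (0::real)"
  have d0: "is_distribution_on S ?\<sigma>0" using s0 finS by (simp add: is_distribution_on_def)
  have key: "2 \<le> flow_energy X w f / l + l * D'" if "is_distribution_on S \<sigma>" "unit_flow X w \<sigma> M f" "l > 0" for \<sigma> f l
  proof -
    have "2 \<le> flow_energy X w f / l + l * (\<Sum>u\<in>X. GG S M n u * (wdeg X w u * GG S M n u - (\<Sum>v\<in>X. w u v * GG S M n v)))"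
      using SX by (intro flow_ineq[OF that(2) that(1) SX MX] that(3)) (auto simp: GG_def)
    also have "\<dots> \<le> flow_energy X w f / l + l * D'"
      unfolding D'_def using dirichlet_bound[OF SX, of n] that(3) by (intro add_left_mono mult_left_mono) auto
    finally show ?thesis .
  qed
  obtain f0 where f0: "unit_flow X w ?\<sigma>0 M f0" using dist_flow[OF conn MX m0 SX d0] by blast
  show Dpos: "D' > 0"
  proof (rule ccontr)
    assume "\<not> D' > 0"
    then have "D' \<le> 0" by simp
    define E where "E = flow_energy X w f0"
    have E0: "0 \<le> E" unfolding E_def by (rule energy_nn)
    have "2 \<le> E / (E + 1) + (E + 1) * D'" using key[OF d0 f0, of "E+1"] E0 unfolding E_def by simp
    moreover have "(E + 1) * D' \<le> 0" using \<open>D' \<le> 0\<close> E0 by (simp add: mult_nonneg_nonpos)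
    moreover have "E / (E + 1) < 1" using E0 by simp
    ultimately show False by linarith
  qed
  have fl: "1 / D' \<le> flow_energy X w f" if "is_distribution_on S \<sigma>" "unit_flow X w \<sigma> M f" for \<sigma> f
  proof -
    have "2 \<le> flow_energy X w f / (1 / D') + (1 / D') * D'" using key[OF that, of "1/D'"] Dpos by simp
    then have "1 \<le> flow_energy X w f * D'" using Dpos by simp
    then show ?thesis using Dpos by (simp add: field_simps)
  qed
  have er: "1 / D' \<le> eff_res X w \<sigma> M" if ds: "is_distribution_on S \<sigma>" for \<sigma>
  proof -
    obtain f where "unit_flow X w \<sigma> M f" using dist_flow[OF conn MX m0 SX ds] by blast
    then have ne: "{flow_energy X w p | p. unit_flow X w \<sigma> M p} \<noteq> {}" by blast
    show ?thesis unfolding eff_res_def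
      by (rule cInf_greatest[OF ne]) (auto intro: fl[OF ds])
  qed
  have ne2: "{eff_res X w \<sigma> M | \<sigma>. is_distribution_on S \<sigma>} \<noteq> {}" using d0 by blast
  show "eff_res_set X w S M \<ge> 1 / D'" unfolding eff_res_set_def
    by (rule cInf_greatest[OF ne2]) (auto intro: er)
qed

end


lemma degpos_conn:
  assumes wgr: "weighted_graph X w" and conn: "connected_wgraph X w"
    and MX: "M \<subseteq> X" "M \<noteq> {}" and SX: "S \<subseteq> X - M" "S \<noteq> {}" and u: "u \<in> X"
  shows "wdeg X w u > 0"
proof -
  have fin: "finite X" and nn: "\<And>a b. a \<in> X \<Longrightarrow> b \<in> X \<Longrightarrow> 0 \<le> w a b"
    using wgr unfolding weighted_graph_def by auto
  obtain t where t: "t \<in> X" "t \<noteq> u"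
  proof (cases "u \<in> M")
    case True
    obtain s where "s \<in> S" using SX by auto
    then show ?thesis using that True SX by auto
  next
    case False
    obtain m where "m \<in> M" using MX by auto
    then show ?thesis using that False MX by auto
  qed
  have "(u, t) \<in> {(a, b). a \<in> X \<and> b \<in> X \<and> 0 < w a b}\<^sup>*"
    using conn u t unfolding connected_wgraph_def by blast
  then obtain b where b: "(u, b) \<in> {(a, b). a \<in> X \<and> b \<in> X \<and> 0 < w a b}"
  proof (rule converse_rtranclE)
    show "u = t \<Longrightarrow> thesis" using t(2) by simp
  qed (rule that)
  then have "b \<in> X" "0 < w u b" by auto
  have "w u b \<le> wdeg X w u" unfolding wdeg_def
    using fin \<open>b\<in>X\<close> nn u by (intro member_le_sum) auto
  then show ?thesis using \<open>0 < w u b\<close> by simp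
qed

lemma Pk_len: "Pk X w u k (\<lambda>vs. length vs = k \<longrightarrow> E vs) = Pk X w u k E"
  unfolding Pk_def by (intro sum.cong refl) (auto simp: LL_def)

theorem mainTheorem4:
  fixes X :: "'a set" and w :: "'a \<Rightarrow> 'a \<Rightarrow> real"
    and M S :: "'a set" and p :: real and T :: nat
  assumes "weighted_graph X w"
    and "connected_wgraph X w"
    and "M \<subseteq> X" and "M \<noteq> {}"
    and "S \<subseteq> X - M" and "S \<noteq> {}"
    and "T > 0"
    and "2 / real T \<le> stat_meas X w S * p"
    and "stat_meas X w S * p \<le> 1 / commute_C X w S M"
  shows "walk_prob X w (stat_restr X w S) T (hit_then_return M S T) \<ge> p / 2"
proof -
  note wgr = assms(1) and conn = assms(2) and MX = assms(3) and Mne = assms(4)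
    and SX = assms(5) and Sne = assms(6) and hT = assms(8) and hC = assms(9)
  have fin: "finite X" and symw: "\<And>a b. a \<in> X \<Longrightarrow> b \<in> X \<Longrightarrow> w a b = w b a"
    and nn: "\<And>a b. a \<in> X \<Longrightarrow> b \<in> X \<Longrightarrow> 0 \<le> w a b"
    using wgr unfolding weighted_graph_def by auto
  have Xne: "X \<noteq> {}" using MX Mne by auto
  interpret wg X w
    using fin symw nn degpos_conn[OF wgr conn MX Mne SX Sne] Xne by unfold_locales auto
  obtain n where Tn: "T = Suc n" using assms(7) by (cases T) auto
  have SXX: "S \<subseteq> X" using SX by auto
  have finS: "finite S" using SXX fin finite_subset by blast
  define \<pi>S where "\<pi>S = stat_meas X w S"
  define \<mu> where "\<mu> = stat_restr X w S"
  have piS_pos: "\<pi>S > 0"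
  proof -
    obtain s where s: "s \<in> S" using Sne by auto
    have "\<pi> s > 0" using s SXX degpos[of s] W_pos by (auto simp: stat_dist_def)
    then show ?thesis unfolding \<pi>S_def stat_meas_def
      using finS s SXX pi_nn by (intro sum_pos2[OF finS s]) auto
  qed
  have mu_S: "\<And>s. s \<in> S \<Longrightarrow> \<mu> s = \<pi> s / \<pi>S" by (simp add: \<mu>_def stat_restr_def \<pi>S_def)
  have mu_nn: "\<And>s. s \<in> S \<Longrightarrow> 0 \<le> \<mu> s" using mu_S pi_nn SXX piS_pos by auto
  have mu_sum: "(\<Sum>s\<in>S. \<mu> s) = 1"
    using piS_pos by (simp add: mu_S sum_divide_distrib[symmetric] \<pi>S_def stat_meas_def)
  have wp: "walk_prob X w \<mu> T (hit_then_return M S T)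
      = (\<Sum>s\<in>S. \<mu> s * Pk X w s n (\<lambda>vs. hit_then_return M S T (s # vs)))"
    unfolding Tn walk_prob_Pk[OF fin]
    using fin SXX by (intro sum.mono_neutral_right) (auto simp: \<mu>_def stat_restr_def)
  have per: "1 - ff S n s - qq S M n s \<le> Pk X w s n (\<lambda>vs. hit_then_return M S T (s # vs))"
    if s: "s \<in> S" for s
  proof -
    have sX: "s \<in> X" using s SXX by auto
    have "1 = Pk X w s n (\<lambda>vs. length vs = n \<longrightarrow> True)" using Pk_len Pk_True[OF sX] by simp
    also have "\<dots> \<le> Pk X w s n (\<lambda>vs. hit_then_return M S T (s # vs) \<or>
        ((\<forall>x\<in>set vs. x \<notin> S) \<or> retS S M vs))"
      using Pk_len[of X w s n "\<lambda>vs. hit_then_return M S T (s # vs) \<or> ((\<forall>x\<in>set vs. x \<notin> S) \<or> retS S M vs)"]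
        Pk_mono[OF sX, of "\<lambda>vs. length vs = n \<longrightarrow> True"
          "\<lambda>vs. length vs = n \<longrightarrow> (hit_then_return M S T (s # vs) \<or> ((\<forall>x\<in>set vs. x \<notin> S) \<or> retS S M vs))" n]
        trichotomy[OF s _ Tn] by auto
    also have "\<dots> \<le> Pk X w s n (\<lambda>vs. hit_then_return M S T (s # vs))
        + Pk X w s n (\<lambda>vs. (\<forall>x\<in>set vs. x \<notin> S) \<or> retS S M vs)"
      by (rule Pk_add[OF sX])
    also have "Pk X w s n (\<lambda>vs. (\<forall>x\<in>set vs. x \<notin> S) \<or> retS S M vs) \<le> ff S n s + qq S M n s"
      unfolding ff_def qq_def by (rule Pk_add[OF sX])
    finally show ?thesis by simp
  qed
  have lower: "walk_prob X w \<mu> T (hit_then_return M S T)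
      \<ge> 1 - (\<Sum>s\<in>S. \<mu> s * ff S n s) - (\<Sum>s\<in>S. \<mu> s * qq S M n s)"
  proof -
    have "(\<Sum>s\<in>S. \<mu> s * (1 - ff S n s - qq S M n s))
        \<le> (\<Sum>s\<in>S. \<mu> s * Pk X w s n (\<lambda>vs. hit_then_return M S T (s # vs)))"
      by (intro sum_mono mult_left_mono per mu_nn)
    moreover have "(\<Sum>s\<in>S. \<mu> s * (1 - ff S n s - qq S M n s))
        = 1 - (\<Sum>s\<in>S. \<mu> s * ff S n s) - (\<Sum>s\<in>S. \<mu> s * qq S M n s)"
      using mu_sum by (simp add: right_diff_distrib sum_subtractf)
    ultimately show ?thesis using wp by simp
  qed
  have kac: "(\<Sum>s\<in>S. \<mu> s * ff S n s) \<le> p / 2"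
  proof -
    have "(\<Sum>s\<in>S. \<mu> s * ff S n s) = (\<Sum>s\<in>S. \<pi> s * ff S n s) / \<pi>S"
      by (simp add: mu_S sum_divide_distrib)
    also have "\<dots> \<le> (1 / real T) / \<pi>S"
      using kac_bound[OF SXX, of n] piS_pos Tn by (intro divide_right_mono) (auto simp: field_simps)
    also have "\<dots> \<le> p / 2"
    proof -
      have h: "2 / real T \<le> \<pi>S * p" using hT unfolding \<pi>S_def .
      have "(2 / real T) / \<pi>S \<le> (\<pi>S * p) / \<pi>S"
        using h piS_pos by (intro divide_right_mono) auto
      then have "(2 / real T) / \<pi>S \<le> p" using piS_pos by simp
      then show ?thesis by simp
    qed
    finally show ?thesis .
  qed
  define D' where "D' = (\<Sum>s\<in>S. wdeg X w s * (1 - qq S M n s))"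
  have Dpos: "D' > 0" and Rb: "eff_res_set X w S M \<ge> 1 / D'"
    using res_bound[OF conn MX Mne SX Sne, of n] unfolding D'_def by auto
  have Cb: "1 / commute_C X w S M \<le> D' / wtotal X w"
  proof -
    have "wtotal X w / D' \<le> commute_C X w S M"
      unfolding commute_C_def using Rb W_pos mult_left_mono[OF Rb, of "wtotal X w"]
      by (simp add: field_simps)
    moreover have "0 < wtotal X w / D'" using W_pos Dpos by simp
    ultimately have Cpos: "0 < commute_C X w S M" by linarith
    have "1 / commute_C X w S M \<le> 1 / (wtotal X w / D')"
      using Cpos W_pos Dpos \<open>wtotal X w / D' \<le> commute_C X w S M\<close>
      by (intro divide_left_mono) auto
    then show ?thesis by simp
  qed
  have qb: "p \<le> 1 - (\<Sum>s\<in>S. \<mu> s * qq S M n s)"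
  proof -
    have "D' / wtotal X w = (\<Sum>s\<in>S. \<pi> s * (1 - qq S M n s))"
      unfolding D'_def by (simp add: sum_divide_distrib stat_dist_def)
    also have "\<dots> = \<pi>S * (\<Sum>s\<in>S. \<mu> s * (1 - qq S M n s))"
      using piS_pos by (simp add: mu_S sum_distrib_left)
    also have "(\<Sum>s\<in>S. \<mu> s * (1 - qq S M n s)) = 1 - (\<Sum>s\<in>S. \<mu> s * qq S M n s)"
      using mu_sum by (simp add: right_diff_distrib sum_subtractf)
    finally have "\<pi>S * p \<le> \<pi>S * (1 - (\<Sum>s\<in>S. \<mu> s * qq S M n s))"
      using hC Cb unfolding \<pi>S_def by linarith
    then show ?thesis using piS_pos by simp
  qed
  show ?thesis using lower kac qb unfolding \<mu>_def by linarith
qed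



end
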